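(* For every hypothesis class $\mathcal{H}\subseteq\{0,1\}^{\mathcal{X}}$, $\mathtt{CD}(\mathcal{H})<\infty$ if and only if $\mathtt{LD}(\mathcal{H})<\infty$.
   Context: A dataset of size $m$ is $S=((x_1,y_1),\dots,(x_m,y_m))\in(\mathcal{X}\times\{0,1\})^m$; it is $\mathcal{H}$-realizable if some $h\in\mathcal{H}$ satisfies $h(x_i)=y_i$ for all $i$. $G_m(\mathcal{H})$ is the graph on realizable datasets of size $m$ with $S,S'$ adjacent iff there is $x$ with $(x,0)$ appearing in $S$ and $(x,1)$ appearing in $S'$; $\omega_m$ is its clique number; $\mathtt{CD}(\mathcal{H})=\sup\{m:\omega_m=2^m\}$. A mistake tree is a complete binary tree whose internal nodes are labeled by points of $\mathcal{X}$, each internal node having one outgoing edge labeled $0$ and one labeled $1$; a root-to-leaf path yields the sequence of (node label, edge label) pairs. $\mathcal{H}$ shatters the tree if every root-to-leaf path is realizable by $\mathcal{H}$. $\mathtt{LD}(\mathcal{H})$ is the largest depth of a complete mistake tree shattered by $\mathcal{H}$ ($\infty$ if unbounded). *)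

theory Defs
  imports Main "HOL-Library.Extended_Nat"
begin

(* Labels: False = 0, True = 1.  A hypothesis class is a set of functions 'x => bool. *)

type_synonym 'x dataset = "('x \<times> bool) list"

definition realizable :: "('x \<Rightarrow> bool) set \<Rightarrow> ('x \<times> bool) list \<Rightarrow> bool" where
  "realizable H S \<longleftrightarrow> (\<exists>h\<in>H. \<forall>(x, y)\<in>set S. h x = y)"

definition vertices :: "('x \<Rightarrow> bool) set \<Rightarrow> nat \<Rightarrow> 'x dataset set" where
  "vertices H m = {S. length S = m \<and> realizable H S}"

definition adj :: "'x dataset \<Rightarrow> 'x dataset \<Rightarrow> bool" where
  "adj S S' \<longleftrightarrow> (\<exists>x. ((x, False) \<in> set S \<and> (x, True) \<in> set S') \<or>
                     ((x, True) \<in> set S \<and> (x, False) \<in> set S'))"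

definition is_clique :: "('x \<Rightarrow> bool) set \<Rightarrow> nat \<Rightarrow> 'x dataset set \<Rightarrow> bool" where
  "is_clique H m C \<longleftrightarrow> C \<subseteq> vertices H m \<and> (\<forall>S\<in>C. \<forall>S'\<in>C. S \<noteq> S' \<longrightarrow> adj S S')"

definition omega :: "('x \<Rightarrow> bool) set \<Rightarrow> nat \<Rightarrow> enat" where
  "omega H m = Sup {enat (card C) | C. finite C \<and> is_clique H m C}"

definition CD :: "('x \<Rightarrow> bool) set \<Rightarrow> enat" where
  "CD H = Sup {enat m | m. omega H m = enat (2 ^ m)}"

(* mistake trees: Node x t0 t1, edge 0 leads to t0, edge 1 leads to t1 *)
datatype 'x mtree = Leaf | Node 'x "'x mtree" "'x mtree"

fun complete_depth :: "'x mtree \<Rightarrow> nat \<Rightarrow> bool" where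
  "complete_depth Leaf d = (d = 0)"
| "complete_depth (Node x t0 t1) d =
     (\<exists>d'. d = Suc d' \<and> complete_depth t0 d' \<and> complete_depth t1 d')"

fun paths :: "'x mtree \<Rightarrow> ('x \<times> bool) list set" where
  "paths Leaf = {[]}"
| "paths (Node x t0 t1) = ((#) (x, False)) ` paths t0 \<union> ((#) (x, True)) ` paths t1"

definition shatters_tree :: "('x \<Rightarrow> bool) set \<Rightarrow> 'x mtree \<Rightarrow> bool" where
  "shatters_tree H t \<longleftrightarrow> (\<forall>p\<in>paths t. realizable H p)"

definition LD :: "('x \<Rightarrow> bool) set \<Rightarrow> enat" where
  "LD H = Sup {enat d | d. \<exists>t. complete_depth t d \<and> shatters_tree H t}"

end

theory Submission
  imports Defs
begin

definition sh :: "('x \<Rightarrow> bool) set \<Rightarrow> nat \<Rightarrow> bool" where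
  "sh H d \<longleftrightarrow> (\<exists>t. complete_depth t d \<and> shatters_tree H t)"

lemma realizable_mono: "H \<subseteq> H' \<Longrightarrow> realizable H p \<Longrightarrow> realizable H' p"
  unfolding realizable_def by blast

lemma sh_mono: "H \<subseteq> H' \<Longrightarrow> sh H d \<Longrightarrow> sh H' d"
  unfolding sh_def shatters_tree_def using realizable_mono by blast

lemma sh_zero: "H \<noteq> {} \<Longrightarrow> sh H 0"
  unfolding sh_def shatters_tree_def
  by (rule exI[of _ Leaf]) (auto simp: realizable_def)

lemma sh_zero_iff: "sh H 0 \<longleftrightarrow> H \<noteq> {}"
proof
  assume "sh H 0"
  then obtain t where "complete_depth t 0" "shatters_tree H t" unfolding sh_def by blast
  then have "t = Leaf" by (cases t) auto
  with \<open>shatters_tree H t\<close> show "H \<noteq> {}" by (auto simp: shatters_tree_def realizable_def)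
qed (rule sh_zero)

lemma sh_node:
  assumes "sh {h\<in>H. h x = False} d" "sh {h\<in>H. h x = True} d"
  shows "sh H (Suc d)"
proof -
  obtain t0 where t0: "complete_depth t0 d" "shatters_tree {h\<in>H. h x = False} t0"
    using assms(1) unfolding sh_def by blast
  obtain t1 where t1: "complete_depth t1 d" "shatters_tree {h\<in>H. h x = True} t1"
    using assms(2) unfolding sh_def by blast
  have "complete_depth (Node x t0 t1) (Suc d)" using t0 t1 by simp
  moreover have "shatters_tree H (Node x t0 t1)"
    unfolding shatters_tree_def
  proof
    fix p assume "p \<in> paths (Node x t0 t1)"
    then consider q where "q \<in> paths t0" "p = (x, False) # q" | q where "q \<in> paths t1" "p = (x, True) # q"
      by auto
    then show "realizable H p"
    proof cases
      case 1
      then obtain h where "h \<in> H" "h x = False" "\<forall>(a, b)\<in>set q. h a = b"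
        using t0(2) unfolding shatters_tree_def realizable_def by blast
      then show ?thesis using 1 unfolding realizable_def by auto
    next
      case 2
      then obtain h where "h \<in> H" "h x = True" "\<forall>(a, b)\<in>set q. h a = b"
        using t1(2) unfolding shatters_tree_def realizable_def by blast
      then show ?thesis using 2 unfolding realizable_def by auto
    qed
  qed
  ultimately show ?thesis unfolding sh_def by blast
qed

lemma sh_node_b:
  assumes "sh {h\<in>H. h x = b} d" "sh {h\<in>H. h x = (\<not>b)} d"
  shows "sh H (Suc d)"
  using assms sh_node[of H x d] by (cases b) auto


lemma paths_len: "complete_depth t d \<Longrightarrow> p \<in> paths t \<Longrightarrow> length p = d"
  by (induction t arbitrary: d p) auto

lemma paths_card: "complete_depth t d \<Longrightarrow> finite (paths t) \<and> card (paths t) = 2 ^ d"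
proof (induction t arbitrary: d)
  case Leaf
  then show ?case by simp
next
  case (Node x t0 t1)
  then obtain d' where d: "d = Suc d'" "complete_depth t0 d'" "complete_depth t1 d'" by auto
  with Node.IH have f: "finite (paths t0)" "card (paths t0) = 2^d'" "finite (paths t1)" "card (paths t1) = 2^d'"
    by blast+
  have "card ((#) (x, False) ` paths t0) = 2^d'" using f by (simp add: card_image)
  moreover have "card ((#) (x, True) ` paths t1) = 2^d'" using f by (simp add: card_image)
  moreover have "(#) (x, False) ` paths t0 \<inter> (#) (x, True) ` paths t1 = {}" by auto
  ultimately show ?case using f d by (simp add: card_Un_disjoint)
qed

lemma paths_adj: "p \<in> paths t \<Longrightarrow> q \<in> paths t \<Longrightarrow> p \<noteq> q \<Longrightarrow> adj p q"
proof (induction t arbitrary: p q)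
  case Leaf
  then show ?case by simp
next
  case (Node x t0 t1)
  show ?case
  proof (cases "\<exists>p'\<in>paths t0. p = (x, False) # p'")
    case True
    then obtain p' where p': "p' \<in> paths t0" "p = (x, False) # p'" by blast
    show ?thesis
    proof (cases "\<exists>q'\<in>paths t0. q = (x, False) # q'")
      case True
      then obtain q' where q': "q' \<in> paths t0" "q = (x, False) # q'" by blast
      have "adj p' q'" using Node.IH(1)[OF p'(1) q'(1)] p' q' Node.prems by auto
      then show ?thesis using p' q' unfolding adj_def by auto
    next
      case False
      then obtain q' where "q = (x, True) # q'" using Node.prems by auto
      then show ?thesis using p' unfolding adj_def by auto
    qed
  next
    case False
    then obtain p' where p': "p' \<in> paths t1" "p = (x, True) # p'" using Node.prems by auto
    show ?thesis
    proof (cases "\<exists>q'\<in>paths t1. q = (x, True) # q'")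
      case True
      then obtain q' where q': "q' \<in> paths t1" "q = (x, True) # q'" by blast
      have "adj p' q'" using Node.IH(2)[OF p'(1) q'(1)] p' q' Node.prems by auto
      then show ?thesis using p' q' unfolding adj_def by auto
    next
      case False
      then obtain q' where "q = (x, False) # q'" using Node.prems by auto
      then show ?thesis using p' unfolding adj_def by auto
    qed
  qed
qed

lemma sh_clique:
  assumes "sh H d"
  shows "\<exists>C. finite C \<and> is_clique H d C \<and> card C = 2 ^ d"
proof -
  obtain t where t: "complete_depth t d" "shatters_tree H t" using assms unfolding sh_def by blast
  have "is_clique H d (paths t)"
    unfolding is_clique_def vertices_def
  proof (intro conjI ballI impI subsetI)
    fix p assume "p \<in> paths t"
    then have "length p = d" "realizable H p"
      using paths_len[OF t(1)] t(2) unfolding shatters_tree_def by auto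
    then show "p \<in> {S. length S = d \<and> realizable H S}" by simp
  next
    fix p q assume "p \<in> paths t" "q \<in> paths t" "p \<noteq> q"
    then show "adj p q" by (rule paths_adj)
  qed
  then show ?thesis using paths_card[OF t(1)] by blast
qed

lemma clique_card_le:
  assumes cl: "is_clique H m C" and fin: "finite C"
  shows "card C \<le> 2 ^ m"
proof -
  define X0 where "X0 = (\<Union>S\<in>C. fst ` set S)"
  have finX0: "finite X0" unfolding X0_def using fin by auto
  define n where "n = card X0"
  define E where "E S = {A. A \<subseteq> X0 \<and> (\<forall>(x,y)\<in>set S. (x \<in> A) = y)}" for S :: "'a dataset"
  have vert: "\<And>S. S \<in> C \<Longrightarrow> length S = m \<and> realizable H S"
    using cl unfolding is_clique_def vertices_def by auto
  have disj: "\<forall>S\<in>C. \<forall>T\<in>C. S \<noteq> T \<longrightarrow> E S \<inter> E T = {}"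
  proof (intro ballI impI)
    fix S T assume S: "S \<in> C" and T: "T \<in> C" and ne: "S \<noteq> T"
    then have "adj S T" using cl unfolding is_clique_def by blast
    then obtain x where x: "((x, False) \<in> set S \<and> (x, True) \<in> set T) \<or>
                     ((x, True) \<in> set S \<and> (x, False) \<in> set T)" unfolding adj_def by blast
    show "E S \<inter> E T = {}"
    proof (rule ccontr)
      assume "E S \<inter> E T \<noteq> {}"
      then obtain A where "\<forall>(x,y)\<in>set S. (x \<in> A) = y" "\<forall>(x,y)\<in>set T. (x \<in> A) = y"
        unfolding E_def by blast
      then show False using x by auto
    qed
  qed
  have finE: "\<And>S. finite (E S)" unfolding E_def using finX0 by auto
  have lower: "2 ^ (n - m) \<le> card (E S)" if S: "S \<in> C" for S
  proof -
    define D where "D = fst ` set S"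
    define Tr where "Tr = {x. (x, True) \<in> set S}"
    obtain h where h: "\<forall>(x,y)\<in>set S. h x = y" using vert[OF S] unfolding realizable_def by blast
    have DX: "D \<subseteq> X0" unfolding D_def X0_def using S by auto
    have TrD: "Tr \<subseteq> D" unfolding Tr_def D_def by force
    have cardD: "card D \<le> m"
      unfolding D_def using vert[OF S] card_image_le[of "set S" fst] card_length[of S] by simp
    have inj: "inj_on (\<lambda>B. Tr \<union> B) (Pow (X0 - D))"
    proof (rule inj_onI)
      fix B1 B2 assume "B1 \<in> Pow (X0 - D)" "B2 \<in> Pow (X0 - D)" "Tr \<union> B1 = Tr \<union> B2"
      then show "B1 = B2" using TrD by blast
    qed
    have sub: "(\<lambda>B. Tr \<union> B) ` Pow (X0 - D) \<subseteq> E S"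
    proof
      fix A assume "A \<in> (\<lambda>B. Tr \<union> B) ` Pow (X0 - D)"
      then obtain B where B: "B \<subseteq> X0 - D" "A = Tr \<union> B" by blast
      have "A \<subseteq> X0" using B DX TrD by blast
      moreover have "\<forall>(x,y)\<in>set S. (x \<in> A) = y"
      proof (clarify)
        fix x y assume xy: "(x, y) \<in> set S"
        have "x \<in> D" using xy unfolding D_def by force
        then have "x \<notin> B" using B by blast
        have "(x \<in> Tr) = y"
        proof
          assume "x \<in> Tr"
          then have "(x, True) \<in> set S" unfolding Tr_def by simp
          then have "h x = True" using h by auto
          moreover have "h x = y" using h xy by auto
          ultimately show y by simp
        next
          assume y then show "x \<in> Tr" using xy unfolding Tr_def by simp
        qed
        then show "(x \<in> A) = y" using B \<open>x \<notin> B\<close> by blast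
      qed
      ultimately show "A \<in> E S" unfolding E_def by blast
    qed
    have "card (Pow (X0 - D)) = 2 ^ card (X0 - D)" using finX0 by (simp add: card_Pow)
    moreover have "card (X0 - D) = n - card D" unfolding n_def using DX finX0 by (simp add: card_Diff_subset finite_subset)
    ultimately have "card ((\<lambda>B. Tr \<union> B) ` Pow (X0 - D)) = 2 ^ (n - card D)"
      using inj by (simp add: card_image)
    then have "2 ^ (n - card D) \<le> card (E S)" using card_mono[OF finE sub] by simp
    moreover have "(2::nat) ^ (n - m) \<le> 2 ^ (n - card D)" using cardD by (intro power_increasing) auto
    ultimately show ?thesis by linarith
  qed
  have "card C * 2 ^ (n - m) = (\<Sum>S\<in>C. 2 ^ (n - m))" by simp
  also have "\<dots> \<le> (\<Sum>S\<in>C. card (E S))" using lower by (intro sum_mono) auto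
  also have "\<dots> = card (\<Union>S\<in>C. E S)" using disj fin finE by (simp add: card_UN_disjoint)
  also have "\<dots> \<le> card (Pow X0)"
    by (intro card_mono) (use finX0 in \<open>auto simp: E_def\<close>)
  also have "\<dots> = 2 ^ n" using finX0 n_def by (simp add: card_Pow)
  finally have main: "card C * 2 ^ (n - m) \<le> 2 ^ n" .
  show ?thesis
  proof (cases "m \<le> n")
    case True
    then have "(2::nat) ^ n = 2 ^ m * 2 ^ (n - m)" by (simp flip: power_add)
    with main show ?thesis by simp
  next
    case False
    then have "(2::nat) ^ n \<le> 2 ^ m" by (intro power_increasing) auto
    moreover have "card C \<le> 2 ^ n" using main False by simp
    ultimately show ?thesis by linarith
  qed
qed


lemma split_count:
  fixes w :: "'x dataset \<Rightarrow> ('x \<Rightarrow> bool)"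
  assumes "finite Z"
  shows "\<And>C H d. finite C \<Longrightarrow> (\<forall>S\<in>C. w S \<in> H) \<Longrightarrow> \<not> sh H (Suc d) \<Longrightarrow>
    (\<And>lam e. \<not> sh {h\<in>H. \<forall>z\<in>Z. h z = lam z} (Suc e) \<Longrightarrow>
         card {S\<in>C. \<forall>z\<in>Z. w S z = lam z} \<le> (n+1)^e) \<Longrightarrow>
    card C \<le> (n + card Z + 1)^d"
  using assms
proof (induction Z rule: finite_induct)
  case (empty C H d)
  have "card {S\<in>C. \<forall>z\<in>{}. w S z = (\<lambda>_. True) z} \<le> (n+1)^d"
    using empty.prems(4)[of "\<lambda>_. True" d] empty.prems(3) by simp
  then show ?case by simp
next
  case (insert z Z C H d)
  define Hb where "Hb b = {h\<in>H. h z = b}" for b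
  define Cb where "Cb b = {S\<in>C. w S z = b}" for b
  let ?N = "n + card Z + 1"
  have IHb: "card (Cb b) \<le> ?N^e" if a: "\<not> sh (Hb b) (Suc e)" for b e
  proof (rule insert.IH)
    show "finite (Cb b)" using insert.prems(1) unfolding Cb_def by simp
    show "\<forall>S\<in>Cb b. w S \<in> Hb b" using insert.prems(2) unfolding Cb_def Hb_def by simp
    show "\<not> sh (Hb b) (Suc e)" by (rule a)
  next
    fix lam e'
    assume ne: "\<not> sh {h\<in>Hb b. \<forall>z'\<in>Z. h z' = lam z'} (Suc e')"
    have eqH: "{h\<in>Hb b. \<forall>z'\<in>Z. h z' = lam z'} = {h\<in>H. \<forall>z'\<in>insert z Z. h z' = (lam(z:=b)) z'}"
      using insert.hyps(2) unfolding Hb_def by auto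
    have eqC: "{S\<in>Cb b. \<forall>z'\<in>Z. w S z' = lam z'} = {S\<in>C. \<forall>z'\<in>insert z Z. w S z' = (lam(z:=b)) z'}"
      using insert.hyps(2) unfolding Cb_def by auto
    show "card {S\<in>Cb b. \<forall>z'\<in>Z. w S z' = lam z'} \<le> (n+1)^e'"
      using insert.prems(4)[of "lam(z:=b)" e'] ne unfolding eqH eqC by simp
  qed
  have Cun: "C = Cb b \<union> Cb (\<not> b)" for b unfolding Cb_def by auto
  have Cdisj: "Cb b \<inter> Cb (\<not> b) = {}" for b unfolding Cb_def by auto
  have cardC: "card C = card (Cb b) + card (Cb (\<not> b))" for b
    using Cun[of b] Cdisj[of b] insert.prems(1) card_Un_disjoint[of "Cb b" "Cb (\<not> b)"]
    unfolding Cb_def by simp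
  obtain b where nb: "\<not> sh (Hb b) d"
  proof -
    have "\<not> (sh (Hb False) d \<and> sh (Hb True) d)"
      using sh_node[of H z d] insert.prems(3) unfolding Hb_def by blast
    then show ?thesis using that by blast
  qed
  have nsb: "\<not> sh (Hb b') (Suc d)" for b'
    using insert.prems(3) sh_mono[of "Hb b'" H "Suc d"] unfolding Hb_def by blast
  have cins: "card (insert z Z) = Suc (card Z)" using insert.hyps by simp
  show ?case
  proof (cases d)
    case 0
    then have "Hb b = {}" using nb sh_zero by blast
    then have "Cb b = {}" using insert.prems(2) unfolding Cb_def Hb_def by blast
    moreover have "card (Cb (\<not> b)) \<le> ?N^0" using IHb[of "\<not> b" 0] nsb 0 by simp
    ultimately show ?thesis using cardC[of b] 0 by simp
  next
    case (Suc d')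
    have c1: "card (Cb b) \<le> ?N^d'" using IHb[of b d'] nb Suc by simp
    have c2: "card (Cb (\<not> b)) \<le> ?N^(Suc d')" using IHb[of "\<not> b" d] nsb Suc by simp
    have "card C \<le> ?N^d' + ?N^(Suc d')" using cardC[of b] c1 c2 by simp
    also have "\<dots> = (?N + 1) * ?N^d'" by simp
    also have "\<dots> \<le> (?N + 1) * (?N + 1)^d'" by (intro mult_le_mono2 power_mono) auto
    also have "\<dots> = (n + card (insert z Z) + 1)^d" using Suc cins by simp
    finally show ?thesis .
  qed
qed

lemma adj_w:
  assumes "\<forall>(x,y)\<in>set S. w S x = y" "\<forall>(x,y)\<in>set T. w T x = y" "adj S T"
  shows "\<exists>x\<in>fst ` set S. x \<in> fst ` set T \<and> w S x \<noteq> w T x"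
proof -
  obtain x where x: "((x, False) \<in> set S \<and> (x, True) \<in> set T) \<or>
                     ((x, True) \<in> set S \<and> (x, False) \<in> set T)" using assms(3) unfolding adj_def by blast
  then show ?thesis
  proof
    assume a: "(x, False) \<in> set S \<and> (x, True) \<in> set T"
    then have "w S x = False" "w T x = True" using assms(1,2) by auto
    moreover have "x \<in> fst ` set S" "x \<in> fst ` set T" using a by force+
    ultimately show ?thesis by auto
  next
    assume a: "(x, True) \<in> set S \<and> (x, False) \<in> set T"
    then have "w S x = True" "w T x = False" using assms(1,2) by auto
    moreover have "x \<in> fst ` set S" "x \<in> fst ` set T" using a by force+
    ultimately show ?thesis by auto
  qed
qed

lemma main_count:
  fixes w :: "'x dataset \<Rightarrow> ('x \<Rightarrow> bool)"
  shows "\<And>C H Q d. finite C \<Longrightarrow> (\<forall>S\<in>C. w S \<in> H \<and> (\<forall>(x,y)\<in>set S. w S x = y)) \<Longrightarrow>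
   (\<forall>S\<in>C. \<forall>T\<in>C. S \<noteq> T \<longrightarrow> adj S T) \<Longrightarrow> (\<forall>S\<in>C. \<forall>T\<in>C. \<forall>x\<in>Q. w S x = w T x) \<Longrightarrow>
   (\<forall>S\<in>C. card (fst ` set S - Q) \<le> k) \<Longrightarrow> \<not> sh H (Suc d) \<Longrightarrow> card C \<le> (k*k+1)^d"
proof (induction k)
  case (0 C H Q d)
  have "card C \<le> Suc 0"
    unfolding card_le_Suc0_iff_eq[OF 0(1)]
  proof (intro ballI, rule ccontr)
    fix S T assume S: "S \<in> C" and T: "T \<in> C" and ne: "S \<noteq> T"
    have "card (fst ` set S - Q) = 0" using 0(5) S by auto
    then have sub: "fst ` set S \<subseteq> Q" by simp
    obtain x where "x \<in> fst ` set S" "w S x \<noteq> w T x"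
      using adj_w[of S w T] 0(2,3) S T ne by blast
    then show False using 0(4) S T sub by blast
  qed
  then show ?case by simp
next
  case (Suc k C H Q d)
  show ?case
  proof (cases "C = {}")
    case True
    then show ?thesis by simp
  next
    case False
    then obtain T where T: "T \<in> C" by blast
    define Z where "Z = fst ` set T - Q"
    have finZ: "finite Z" unfolding Z_def by simp
    have cardZ: "card Z \<le> Suc k" using Suc.prems(5) T unfolding Z_def by blast
    have wT: "\<forall>(x,y)\<in>set T. w T x = y" using Suc.prems(2) T by blast
    have "card C \<le> (k*k + card Z + 1)^d"
    proof (rule split_count[OF finZ])
      show "finite C" by (rule Suc.prems(1))
      show "\<forall>S\<in>C. w S \<in> H" using Suc.prems(2) by blast
      show "\<not> sh H (Suc d)" by (rule Suc.prems(6))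
    next
      fix lam e
      assume ne: "\<not> sh {h\<in>H. \<forall>z\<in>Z. h z = lam z} (Suc e)"
      define Cl where "Cl = {S\<in>C. \<forall>z\<in>Z. w S z = lam z}"
      have "card Cl \<le> (k*k+1)^e"
      proof (cases "T \<in> Cl")
        case True
        have "Cl \<subseteq> {T}"
        proof
          fix U assume U: "U \<in> Cl"
          show "U \<in> {T}"
          proof (rule ccontr)
            assume "U \<notin> {T}"
            then have "U \<noteq> T" by simp
            moreover have "U \<in> C" using U unfolding Cl_def by simp
            moreover have wU: "\<forall>(x,y)\<in>set U. w U x = y" using Suc.prems(2) \<open>U \<in> C\<close> by blast
            ultimately obtain x where x: "x \<in> fst ` set U" "x \<in> fst ` set T" "w U x \<noteq> w T x"
              using adj_w[of U w T] wT Suc.prems(3) T by blast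
            have "x \<notin> Q" using x(3) Suc.prems(4) T \<open>U \<in> C\<close> by blast
            then have "x \<in> Z" using x(2) unfolding Z_def by blast
            then show False using U True x(3) unfolding Cl_def by simp
          qed
        qed
        then have "card Cl \<le> card {T}" by (intro card_mono) simp_all
        then have "card Cl \<le> 1" by simp
        moreover have "(1::nat) \<le> (k*k+1)^e" by simp
        ultimately show ?thesis by linarith
      next
        case False
        show ?thesis
        proof (rule Suc.IH[of Cl "{h\<in>H. \<forall>z\<in>Z. h z = lam z}" "Q \<union> Z" e])
          show "finite Cl" using Suc.prems(1) unfolding Cl_def by simp
          show "\<forall>S\<in>Cl. w S \<in> {h\<in>H. \<forall>z\<in>Z. h z = lam z} \<and> (\<forall>(x,y)\<in>set S. w S x = y)"
            using Suc.prems(2) unfolding Cl_def by blast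
          show "\<forall>S\<in>Cl. \<forall>T\<in>Cl. S \<noteq> T \<longrightarrow> adj S T" using Suc.prems(3) unfolding Cl_def by blast
          show "\<forall>S\<in>Cl. \<forall>T\<in>Cl. \<forall>x\<in>Q \<union> Z. w S x = w T x"
            using Suc.prems(4) unfolding Cl_def by auto
          show "\<not> sh {h\<in>H. \<forall>z\<in>Z. h z = lam z} (Suc e)" by (rule ne)
          show "\<forall>S\<in>Cl. card (fst ` set S - (Q \<union> Z)) \<le> k"
          proof
            fix S assume S: "S \<in> Cl"
            then have SC: "S \<in> C" and SnT: "S \<noteq> T" using False unfolding Cl_def by auto
            have wS: "\<forall>(x,y)\<in>set S. w S x = y" using Suc.prems(2) SC by blast
            obtain x where x: "x \<in> fst ` set S" "x \<in> fst ` set T" "w S x \<noteq> w T x"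
              using adj_w[of S w T] wS wT Suc.prems(3) T SC SnT by blast
            have "x \<notin> Q" using x(3) Suc.prems(4) T SC by blast
            then have xZ: "x \<in> Z" using x(2) unfolding Z_def by blast
            have "fst ` set S - (Q \<union> Z) \<subseteq> (fst ` set S - Q) - {x}" using xZ by blast
            then have "card (fst ` set S - (Q \<union> Z)) \<le> card ((fst ` set S - Q) - {x})"
              by (intro card_mono) auto
            also have "\<dots> = card (fst ` set S - Q) - 1"
              using x(1) \<open>x \<notin> Q\<close> by (simp add: card_Diff_singleton)
            also have "\<dots> \<le> k" using Suc.prems(5) SC by fastforce
            finally show "card (fst ` set S - (Q \<union> Z)) \<le> k" .
          qed
        qed
      qed
      then show "card {S\<in>C. \<forall>z\<in>Z. w S z = lam z} \<le> (k*k+1)^e" unfolding Cl_def .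
    qed
    also have "\<dots> \<le> (Suc k * Suc k + 1)^d"
      using cardZ by (intro power_mono) auto
    finally show ?thesis .
  qed
qed

lemma clique_poly:
  assumes cl: "is_clique H m C" and fin: "finite C" and nsh: "\<not> sh H (Suc d)"
  shows "card C \<le> (m*m+1)^d"
proof -
  define w where "w S = (SOME h. h\<in>H \<and> (\<forall>(x,y)\<in>set S. h x = y))" for S :: "'a dataset"
  have vert: "\<And>S. S \<in> C \<Longrightarrow> length S = m \<and> realizable H S"
    using cl unfolding is_clique_def vertices_def by auto
  have wS: "w S \<in> H \<and> (\<forall>(x,y)\<in>set S. w S x = y)" if "S \<in> C" for S
  proof -
    have "\<exists>h. h\<in>H \<and> (\<forall>(x,y)\<in>set S. h x = y)" using vert[OF that] unfolding realizable_def by blast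
    then show ?thesis unfolding w_def by (rule someI_ex)
  qed
  show ?thesis
  proof (rule main_count[of C w H "{}"])
    show "finite C" by (rule fin)
    show "\<forall>S\<in>C. w S \<in> H \<and> (\<forall>(x,y)\<in>set S. w S x = y)" using wS by blast
    show "\<forall>S\<in>C. \<forall>T\<in>C. S \<noteq> T \<longrightarrow> adj S T" using cl unfolding is_clique_def by blast
    show "\<forall>S\<in>C. \<forall>T\<in>C. \<forall>x\<in>{}. w S x = w T x" by simp
    show "\<not> sh H (Suc d)" by (rule nsh)
    show "\<forall>S\<in>C. card (fst ` set S - {}) \<le> m"
    proof
      fix S assume "S \<in> C"
      have "card (fst ` set S) \<le> card (set S)" by (rule card_image_le) simp
      also have "\<dots> \<le> length S" by (rule card_length)
      finally show "card (fst ` set S - {}) \<le> m" using vert[OF \<open>S \<in> C\<close>] by simp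
    qed
  qed
qed


lemma poly_exp: "\<exists>K. \<forall>n. (n+1)^c \<le> K * (2::nat)^n"
proof (induction c rule: less_induct)
  case (less c)
  show ?case
  proof (cases "c \<le> 1")
    case True
    have "(n+1)^c \<le> 1 * (2::nat)^n" for n
    proof -
      have "n + 1 \<le> (2::nat)^n" using Suc_leI[OF less_exp[of n]] by simp
      have "(n+1)^c \<le> (n+1)^1" using True by (intro power_increasing) auto
      also have "\<dots> \<le> 2^n" using \<open>n + 1 \<le> 2^n\<close> by simp
      finally show ?thesis by simp
    qed
    then show ?thesis by blast
  next
    case False
    define a where "a = (c + 1) div 2"
    have ac: "a < c" "c \<le> 2 * a" using False unfolding a_def by auto
    obtain K where K: "\<And>n. (n+1)^a \<le> K * (2::nat)^n" using less.IH[OF ac(1)] by blast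
    have "(n+1)^c \<le> (2^(2*a) * K^2) * (2::nat)^n" for n
    proof -
      define j where "j = n div 2"
      have nj: "n + 1 \<le> 2 * (j + 1)" "2 * j \<le> n" unfolding j_def by auto
      have "(n+1)^c \<le> (n+1)^(2*a)" using ac by (intro power_increasing) auto
      also have "\<dots> \<le> (2 * (j+1))^(2*a)" using nj by (intro power_mono) auto
      also have "\<dots> = 2^(2*a) * (j+1)^(2*a)" by (rule power_mult_distrib)
      also have "\<dots> = 2^(2*a) * ((j+1)^a)^2" by (metis power_mult mult.commute)
      also have "\<dots> \<le> 2^(2*a) * (K * 2^j)^2" using K[of j] by (intro mult_le_mono2 power_mono) simp_all
      also have "\<dots> = 2^(2*a) * (K^2 * 2^(2*j))" by (metis power_mult_distrib power_mult mult.commute)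
      also have "\<dots> \<le> 2^(2*a) * (K^2 * 2^n)"
        using nj by (intro mult_le_mono2 power_increasing) auto
      finally show ?thesis by simp
    qed
    then show ?thesis by blast
  qed
qed

lemma growth_finite: "finite {m::nat. 2^m \<le> (m*m+1)^D}"
proof -
  obtain K where K: "\<And>n. (n+1)^(2*D+1) \<le> K * (2::nat)^n" using poly_exp by blast
  have "{m::nat. 2^m \<le> (m*m+1)^D} \<subseteq> {..K}"
  proof
    fix m :: nat assume "m \<in> {m. 2^m \<le> (m*m+1)^D}"
    then have a: "2^m \<le> (m*m+1)^D" by simp
    have "(m+1) * 2^m \<le> (m+1) * (m*m+1)^D" using a by (rule mult_le_mono2)
    also have "\<dots> \<le> (m+1) * ((m+1)^2)^D" by (intro mult_le_mono2 power_mono) (auto simp: power2_eq_square)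
    also have "\<dots> = (m+1)^(2*D+1)" by (simp add: power_mult[symmetric])
    also have "\<dots> \<le> K * 2^m" by (rule K)
    finally have "(m+1) * 2^m \<le> K * 2^m" .
    then have "m + 1 \<le> K" using mult_le_cancel2[of "m+1" "2^m" K] by simp
    then show "m \<in> {..K}" by simp
  qed
  then show ?thesis using finite_subset by blast
qed

lemma Sup_enat_image_fin: "Sup (enat ` A) < \<infinity> \<longleftrightarrow> finite A"
proof
  assume a: "Sup (enat ` A) < \<infinity>"
  show "finite A"
  proof (rule ccontr)
    assume "infinite A"
    moreover have "inj_on enat A" by (auto simp: inj_on_def)
    ultimately have "infinite (enat ` A)" by (simp add: finite_image_iff)
    then have "Sup (enat ` A) = \<infinity>" unfolding Sup_enat_def by auto
    with a show False by simp
  qed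
next
  assume f: "finite A"
  show "Sup (enat ` A) < \<infinity>"
  proof (cases "A = {}")
    case True
    then show ?thesis by (simp add: Sup_enat_def)
  next
    case False
    then have "Sup (enat ` A) = Max (enat ` A)" using f unfolding Sup_enat_def by auto
    moreover have "Max (enat ` A) \<in> enat ` A" using f False by (intro Max_in) auto
    ultimately show ?thesis by auto
  qed
qed

lemma omega_clique:
  assumes "omega H m = enat (2^m)"
  shows "\<exists>C. finite C \<and> is_clique H m C \<and> card C = 2^m"
proof -
  define A where "A = {enat (card C) | C. finite C \<and> is_clique H m C}"
  have s: "Sup A = enat (2^m)" using assms unfolding omega_def A_def by simp
  have ne: "A \<noteq> {}"
  proof
    assume "A = {}"
    then have "Sup A = 0" by (simp add: Sup_enat_def)
    with s show False by (simp add: zero_enat_def)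
  qed
  have fA: "finite A"
  proof (rule ccontr)
    assume "infinite A"
    then have "Sup A = \<infinity>" unfolding Sup_enat_def using ne by simp
    with s show False by simp
  qed
  have "Sup A = Max A" using ne fA unfolding Sup_enat_def by simp
  moreover have "Max A \<in> A" by (rule Max_in[OF fA ne])
  ultimately have "enat (2^m) \<in> A" using s by simp
  then show ?thesis unfolding A_def by auto
qed

lemma sh_omega:
  assumes "sh H d"
  shows "omega H d = enat (2^d)"
proof -
  define A where "A = {enat (card C) | C. finite C \<and> is_clique H d C}"
  have "enat (2^d) \<in> A" using sh_clique[OF assms] unfolding A_def by force
  then have "enat (2^d) \<le> Sup A" by (rule Sup_upper)
  moreover have "Sup A \<le> enat (2^d)"
  proof (rule Sup_least)
    fix x assume "x \<in> A"
    then obtain C where "x = enat (card C)" "finite C" "is_clique H d C" unfolding A_def by blast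
    then show "x \<le> enat (2^d)" using clique_card_le by auto
  qed
  ultimately show ?thesis unfolding omega_def A_def by (rule antisym[rotated])
qed

theorem mainTheorem12:
  fixes H :: "('x \<Rightarrow> bool) set"
  shows "CD H < \<infinity> \<longleftrightarrow> LD H < \<infinity>"
proof -
  define M where "M = {m. omega H m = enat (2 ^ m)}"
  define Ds where "Ds = {d. sh H d}"
  have LDe: "LD H = Sup (enat ` Ds)"
    unfolding LD_def Ds_def sh_def by (rule arg_cong[where f=Sup]) auto
  have CDe: "CD H = Sup (enat ` M)"
    unfolding CD_def M_def by (rule arg_cong[where f=Sup]) auto
  have DM: "Ds \<subseteq> M" unfolding Ds_def M_def using sh_omega by blast
  show ?thesis
  proof
    assume "CD H < \<infinity>"
    then have "finite M" using CDe Sup_enat_image_fin[of M] by simp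
    then have "finite Ds" using DM finite_subset by blast
    then show "LD H < \<infinity>" using LDe Sup_enat_image_fin[of Ds] by simp
  next
    assume "LD H < \<infinity>"
    then have "finite Ds" using LDe Sup_enat_image_fin[of Ds] by simp
    then have "\<exists>D. \<forall>d\<in>Ds. d \<le> D" by (simp only: finite_nat_set_iff_bounded_le)
    then obtain D where D: "\<forall>d\<in>Ds. d \<le> D" by (rule exE)
    have nsh: "\<not> sh H (Suc D)"
    proof
      assume "sh H (Suc D)"
      then have "Suc D \<in> Ds" unfolding Ds_def by simp
      then show False using D by fastforce
    qed
    have "M \<subseteq> {m::nat. 2^m \<le> (m*m+1)^D}"
    proof
      fix m assume "m \<in> M"
      then obtain C where C: "finite C" "is_clique H m C" "card C = 2^m"
        using omega_clique unfolding M_def by blast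
      have "card C \<le> (m*m+1)^D" by (rule clique_poly[OF C(2) C(1) nsh])
      then have "2^m \<le> (m*m+1)^D" using C(3) by simp
      then show "m \<in> {m::nat. 2^m \<le> (m*m+1)^D}" by simp
    qed
    then have "finite M" using growth_finite finite_subset by blast
    then show "CD H < \<infinity>" using CDe Sup_enat_image_fin[of M] by simp
  qed
qed
end
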